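(* Let $G$ be a simple undirected graph with infinite chromatic number $\chi(G)$. Then there is a minor $M$ of $G$ such that $M\not\cong G$ and $\chi(M)=\chi(G)$.
   Context: Graphs are simple and undirected: $G=(V,E)$ with $E \subseteq \{\{x,y\}: x,y\in V,\ x\neq y\}$. $\chi(G)$ denotes the chromatic number of $G$, i.e. the least cardinal $\lambda$ such that there is a graph homomorphism $G \to K_\lambda$; $K_\alpha$ is the complete graph on $\alpha$ vertices. Disjoint sets $S,T\subseteq V(G)$ are connected to each other if there are $s\in S$, $t\in T$ with $\{s,t\}\in E(G)$. For a collection $\mathcal D$ of pairwise disjoint, nonempty subsets of $V(G)$, each inducing a connected subgraph, let $G(\mathcal D)$ be the graph with vertex set $\mathcal D$ in which distinct $d,e\in\mathcal D$ are adjacent iff $d$ and $e$ are connected to each other. A graph $M$ is a minor of $G$ if there is such a collection $\mathcal D$ and an injective graph homomorphism $M \to G(\mathcal D)$. *)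

theory Defs
  imports Main
begin

definition simple_graph :: "'a set \<Rightarrow> 'a set set \<Rightarrow> bool" where
  "simple_graph V E \<longleftrightarrow> E \<subseteq> {{x, y} | x y. x \<in> V \<and> y \<in> V \<and> x \<noteq> y}"

definition hom_to_complete :: "'a set \<Rightarrow> 'a set set \<Rightarrow> 'c set \<Rightarrow> bool" where
  "hom_to_complete V E C \<longleftrightarrow>
     (\<exists>f. f ` V \<subseteq> C \<and> (\<forall>x\<in>V. \<forall>y\<in>V. {x, y} \<in> E \<longrightarrow> f x \<noteq> f y))"

text \<open>Colour sets of type 'a set suffice,
  since V itself is always a colour set for a simple graph.\<close>
definition chromatic_number :: "'a set \<Rightarrow> 'a set set \<Rightarrow> 'a rel" where
  "chromatic_number V E = card_of (SOME C :: 'a set. hom_to_complete V E C \<and>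
       (\<forall>C' :: 'a set. hom_to_complete V E C' \<longrightarrow> (card_of C, card_of C') \<in> ordLeq))"

definition induces_connected :: "'a set set \<Rightarrow> 'a set \<Rightarrow> bool" where
  "induces_connected E S \<longleftrightarrow>
     (\<forall>x\<in>S. \<forall>y\<in>S. (x, y) \<in> {(u, v). u \<in> S \<and> v \<in> S \<and> {u, v} \<in> E}\<^sup>*)"

definition connected_to :: "'a set set \<Rightarrow> 'a set \<Rightarrow> 'a set \<Rightarrow> bool" where
  "connected_to E S T \<longleftrightarrow> (\<exists>s\<in>S. \<exists>t\<in>T. {s, t} \<in> E)"

definition is_minor :: "'b set \<Rightarrow> 'b set set \<Rightarrow> 'a set \<Rightarrow> 'a set set \<Rightarrow> bool" where
  "is_minor VM EM V E \<longleftrightarrow>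
     (\<exists>D :: 'a set set.
        (\<forall>d\<in>D. d \<noteq> {} \<and> d \<subseteq> V \<and> induces_connected E d) \<and>
        (\<forall>d\<in>D. \<forall>e\<in>D. d \<noteq> e \<longrightarrow> d \<inter> e = {}) \<and>
        (\<exists>h. inj_on h VM \<and> h ` VM \<subseteq> D \<and>
             (\<forall>x\<in>VM. \<forall>y\<in>VM. {x, y} \<in> EM \<longrightarrow> h x \<noteq> h y \<and> connected_to E (h x) (h y))))"

definition graph_iso :: "'b set \<Rightarrow> 'b set set \<Rightarrow> 'a set \<Rightarrow> 'a set set \<Rightarrow> bool" where
  "graph_iso V1 E1 V2 E2 \<longleftrightarrow>
     (\<exists>f. bij_betw f V1 V2 \<and> (\<forall>x\<in>V1. \<forall>y\<in>V1. {x, y} \<in> E1 \<longleftrightarrow> {f x, f y} \<in> E2))"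

end

theory Submission
  imports Defs
begin

unbundle cardinal_syntax

lemma hom_refl:
  assumes "simple_graph V E"
  shows "hom_to_complete V E V"
  unfolding hom_to_complete_def
proof (intro exI[of _ id] conjI ballI impI)
  fix x y assume "x \<in> V" "y \<in> V" "{x, y} \<in> E"
  then show "id x \<noteq> id y" using assms unfolding simple_graph_def
    by (auto simp: doubleton_eq_iff)
qed auto

lemma hom_vtype:
  assumes "hom_to_complete (V :: 'a set) E (C :: 'c set)"
  shows "\<exists>C' :: 'a set. hom_to_complete V E C' \<and> |C'| \<le>o |C|"
proof -
  obtain f where f: "f ` V \<subseteq> C" "\<forall>x\<in>V. \<forall>y\<in>V. {x, y} \<in> E \<longrightarrow> f x \<noteq> f y"
    using assms unfolding hom_to_complete_def by blast
  have "|f ` V| \<le>o |V|" by (rule card_of_image)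
  then have "\<exists>j. inj_on j (f ` V) \<and> j ` (f ` V) \<subseteq> V"
    by (simp only: card_of_ordLeq[symmetric])
  then obtain j where j: "inj_on j (f ` V)" "j ` (f ` V) \<subseteq> V"
    by blast
  have "hom_to_complete V E (j ` f ` V)"
    unfolding hom_to_complete_def
  proof (intro exI[of _ "j \<circ> f"] conjI ballI impI)
    show "(j \<circ> f) ` V \<subseteq> j ` f ` V" by auto
    fix x y assume xy: "x \<in> V" "y \<in> V" "{x, y} \<in> E"
    then have "f x \<noteq> f y" using f(2) by blast
    moreover have "f x \<in> f ` V" "f y \<in> f ` V" using xy by auto
    ultimately show "(j \<circ> f) x \<noteq> (j \<circ> f) y" using j(1)
      unfolding inj_on_def comp_def by metis
  qed
  moreover have "|j ` f ` V| \<le>o |C|"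
  proof -
    have "|j ` f ` V| \<le>o |f ` V|" by (rule card_of_image)
    moreover have "|f ` V| \<le>o |C|" using f(1) by (rule card_of_mono1)
    ultimately show ?thesis using ordLeq_transitive by blast
  qed
  ultimately show ?thesis by blast
qed

definition chiset :: "'a set \<Rightarrow> 'a set set \<Rightarrow> 'a set" where
  "chiset V E = (SOME C :: 'a set. hom_to_complete V E C \<and>
       (\<forall>C' :: 'a set. hom_to_complete V E C' \<longrightarrow> (card_of C, card_of C') \<in> ordLeq))"

lemma chi_ex:
  assumes "simple_graph (V :: 'a set) E"
  shows "\<exists>C :: 'a set. hom_to_complete V E C \<and>
       (\<forall>C' :: 'a set. hom_to_complete V E C' \<longrightarrow> (card_of C, card_of C') \<in> ordLeq)"
proof -
  let ?R = "card_of ` {C :: 'a set. hom_to_complete V E C}"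
  have "?R \<noteq> {}" using hom_refl[OF assms] by blast
  moreover have "\<forall>r\<in>?R. Well_order r" using card_of_Well_order by blast
  ultimately obtain r where r: "r \<in> ?R" "\<forall>r'\<in>?R. r \<le>o r'"
    using exists_minim_Well_order[of ?R] by blast
  from r(1) obtain C where C: "hom_to_complete V E C" "r = |C|" by blast
  have "\<forall>C' :: 'a set. hom_to_complete V E C' \<longrightarrow> |C| \<le>o |C'|"
  proof (intro allI impI)
    fix C' :: "'a set" assume "hom_to_complete V E C'"
    then have "|C'| \<in> ?R" by blast
    then have "r \<le>o |C'|" using r(2) by (rule bspec[rotated])
    then show "|C| \<le>o |C'|" unfolding C(2) .
  qed
  with C(1) show ?thesis by blast
qed

lemma chi_min:
  assumes "simple_graph (V :: 'a set) E"
  shows "hom_to_complete V E (chiset V E) \<and>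
       (\<forall>C' :: 'a set. hom_to_complete V E C' \<longrightarrow> (card_of (chiset V E), card_of C') \<in> ordLeq)"
proof -
  let ?P = "\<lambda>C :: 'a set. hom_to_complete V E C \<and>
       (\<forall>C' :: 'a set. hom_to_complete V E C' \<longrightarrow> (card_of C, card_of C') \<in> ordLeq)"
  have "\<exists>C. ?P C" by (rule chi_ex[OF assms])
  then have "?P (SOME C. ?P C)" by (rule someI_ex)
  then show ?thesis unfolding chiset_def .
qed

lemma chi_eq: "chromatic_number V E = |chiset V E|"
  unfolding chromatic_number_def chiset_def by (rule refl)

lemma chiset_hom: assumes "simple_graph V E" shows "hom_to_complete V E (chiset V E)"
  using chi_min[OF assms] by (rule conjunct1)

lemma chiset_min: fixes V C' :: "'a set" assumes "simple_graph V E" "hom_to_complete V E C'" shows "|chiset V E| \<le>o |C'|"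
  using conjunct2[OF chi_min[OF assms(1)]] assms(2) by blast

lemma chi_le_hom:
  assumes "simple_graph V E" "hom_to_complete V E C"
  shows "chromatic_number V E \<le>o |C|"
proof -
  obtain C' :: "'a set" where c: "hom_to_complete V E C'" "|C'| \<le>o |C|"
    using hom_vtype[OF assms(2)] by blast
  have "|chiset V E| \<le>o |C'|" by (rule chiset_min[OF assms(1) c(1)])
  from ordLeq_transitive[OF this c(2)] show ?thesis unfolding chi_eq .
qed

lemma chi_le:
  assumes "simple_graph (V1 :: 'a set) E1" "simple_graph (V2 :: 'b set) E2"
    and "\<And>C2 :: 'b set. hom_to_complete V2 E2 C2 \<Longrightarrow>
          \<exists>C1 :: 'x set. hom_to_complete V1 E1 C1 \<and> |C1| \<le>o |C2|"
  shows "chromatic_number V1 E1 \<le>o chromatic_number V2 E2"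
proof -
  obtain C1 :: "'x set" where c: "hom_to_complete V1 E1 C1" "|C1| \<le>o |chiset V2 E2|"
    using assms(3)[OF chiset_hom[OF assms(2)]] by blast
  from ordLeq_transitive[OF chi_le_hom[OF assms(1) c(1)] c(2)] show ?thesis
    unfolding chi_eq[of V2] .
qed


lemma inf_col:
  assumes "simple_graph V E" "infinite (Field (chromatic_number V E))" "hom_to_complete V E C"
  shows "infinite C"
proof -
  have "|chiset V E| \<le>o |C|" using chi_le_hom[OF assms(1,3)] unfolding chi_eq .
  moreover have "infinite (chiset V E)" using assms(2) unfolding chi_eq Field_card_of .
  ultimately show ?thesis by (rule card_of_ordLeq_infinite)
qed

lemma hom_sub:
  assumes "V' \<subseteq> V" "E' \<subseteq> E" "hom_to_complete V E C"
  shows "hom_to_complete V' E' C"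
proof -
  obtain f where f: "f ` V \<subseteq> C" "\<forall>x\<in>V. \<forall>y\<in>V. {x, y} \<in> E \<longrightarrow> f x \<noteq> f y"
    using assms(3) unfolding hom_to_complete_def by blast
  have "f ` V' \<subseteq> C" using f(1) assms(1) by blast
  moreover have "\<forall>x\<in>V'. \<forall>y\<in>V'. {x, y} \<in> E' \<longrightarrow> f x \<noteq> f y"
    using f(2) assms(1,2) by blast
  ultimately show ?thesis unfolding hom_to_complete_def by blast
qed

definition sgV :: "'a set \<Rightarrow> 'a set set" where "sgV V = (\<lambda>x. {x}) ` V"
definition sgE :: "'a set set \<Rightarrow> 'a set set set" where
  "sgE E = {{{x}, {y}} | x y. {x, y} \<in> E}"

lemma sgE_iff: "{{x}, {y}} \<in> sgE E \<longleftrightarrow> {x, y} \<in> E"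
proof
  assume "{{x}, {y}} \<in> sgE E"
  then obtain a b where ab: "{{x}, {y}} = {{a}, {b}}" "{a, b} \<in> E"
    unfolding sgE_def mem_Collect_eq by (elim exE conjE) simp
  from ab(1) have "({x} = {a} \<and> {y} = {b}) \<or> ({x} = {b} \<and> {y} = {a})"
    by (rule doubleton_eq_iff[THEN iffD1])
  then have "(x = a \<and> y = b) \<or> (x = b \<and> y = a)" by simp
  then show "{x, y} \<in> E" using ab(2) by (metis insert_commute)
next
  assume "{x, y} \<in> E"
  then show "{{x}, {y}} \<in> sgE E" unfolding sgE_def
    by (intro CollectI exI[of _ x] exI[of _ y] conjI refl)
qed

lemma sgE_elem:
  assumes "e \<in> sgE E"
  obtains x y where "e = {{x}, {y}}" "{x, y} \<in> E"
  using assms unfolding sgE_def by blast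

lemma sg_hom: "hom_to_complete (sgV V) (sgE E) C \<longleftrightarrow> hom_to_complete V E C"
proof
  assume "hom_to_complete (sgV V) (sgE E) C"
  then obtain g where g: "g ` sgV V \<subseteq> C"
    "\<forall>X\<in>sgV V. \<forall>Y\<in>sgV V. {X, Y} \<in> sgE E \<longrightarrow> g X \<noteq> g Y"
    unfolding hom_to_complete_def by blast
  show "hom_to_complete V E C" unfolding hom_to_complete_def
  proof (intro exI[of _ "\<lambda>x. g {x}"] conjI ballI impI)
    show "(\<lambda>x. g {x}) ` V \<subseteq> C" using g(1) unfolding sgV_def by auto
    fix x y assume "x \<in> V" "y \<in> V" "{x, y} \<in> E"
    then show "g {x} \<noteq> g {y}" using g(2) sgE_iff[of x y E] unfolding sgV_def by blast
  qed
next
  assume "hom_to_complete V E C"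
  then obtain f where f: "f ` V \<subseteq> C" "\<forall>x\<in>V. \<forall>y\<in>V. {x, y} \<in> E \<longrightarrow> f x \<noteq> f y"
    unfolding hom_to_complete_def by blast
  show "hom_to_complete (sgV V) (sgE E) C" unfolding hom_to_complete_def
  proof (intro exI[of _ "\<lambda>X. f (the_elem X)"] conjI ballI impI)
    show "(\<lambda>X. f (the_elem X)) ` sgV V \<subseteq> C" using f(1) unfolding sgV_def by auto
    fix X Y assume XY: "X \<in> sgV V" "Y \<in> sgV V" "{X, Y} \<in> sgE E"
    then obtain x y where "X = {x}" "Y = {y}" "x \<in> V" "y \<in> V" unfolding sgV_def by blast
    then show "f (the_elem X) \<noteq> f (the_elem Y)" using f(2) XY(3) sgE_iff[of x y E] by auto
  qed
qed

lemma sg_simple: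
  assumes "simple_graph V E"
  shows "simple_graph (sgV V) (sgE E)"
  unfolding simple_graph_def
proof
  fix e assume "e \<in> sgE E"
  then obtain x y where e: "e = {{x}, {y}}" "{x, y} \<in> E" by (rule sgE_elem)
  then obtain a b where ab: "{x, y} = {a, b}" "a \<in> V" "b \<in> V" "a \<noteq> b"
    using assms unfolding simple_graph_def by blast
  then have "(x = a \<and> y = b) \<or> (x = b \<and> y = a)" by (auto simp: doubleton_eq_iff)
  then have ee: "e = {{a}, {b}}" using e(1) by (auto simp: insert_commute)
  show "e \<in> {{X, Y} | X Y. X \<in> sgV V \<and> Y \<in> sgV V \<and> X \<noteq> Y}"
    apply (rule CollectI, rule exI[of _ "{a}"], rule exI[of _ "{b}"])
    using ab ee unfolding sgV_def by auto
qed

lemma sg_minor: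
  assumes "V' \<subseteq> V" "E' \<subseteq> E" "simple_graph V E"
  shows "is_minor (sgV V') (sgE E') V E"
proof -
  have A: "\<forall>d\<in>sgV V'. d \<noteq> {} \<and> d \<subseteq> V \<and> induces_connected E d"
  proof
    fix d assume "d \<in> sgV V'"
    then obtain x where x: "d = {x}" "x \<in> V'" unfolding sgV_def by blast
    have "induces_connected E d" unfolding induces_connected_def x(1) by simp
    then show "d \<noteq> {} \<and> d \<subseteq> V \<and> induces_connected E d" using x assms(1) by auto
  qed
  have B: "\<forall>d\<in>sgV V'. \<forall>e\<in>sgV V'. d \<noteq> e \<longrightarrow> d \<inter> e = {}"
    unfolding sgV_def by auto
  have C: "\<forall>X\<in>sgV V'. \<forall>Y\<in>sgV V'. {X, Y} \<in> sgE E' \<longrightarrow> id X \<noteq> id Y \<and> connected_to E (id X) (id Y)"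
  proof (intro ballI impI)
    fix X Y assume XY: "X \<in> sgV V'" "Y \<in> sgV V'" "{X, Y} \<in> sgE E'"
    then obtain x y where xy: "X = {x}" "Y = {y}" unfolding sgV_def by blast
    have e: "{x, y} \<in> E'" using XY(3) sgE_iff[of x y E'] unfolding xy by simp
    then have "connected_to E X Y" using xy assms(2)
      unfolding connected_to_def by blast
    moreover have "X \<noteq> Y"
    proof
      assume "X = Y"
      then have "{{x}} \<in> sgE E'" using XY(3) xy by simp
      then obtain a b where ab: "{{x}} = {{a}, {b}}" "{a, b} \<in> E'" by (rule sgE_elem)
      then have "{a, b} = {x}" by (auto simp: doubleton_eq_iff)
      then have "{x} \<in> E" using ab(2) assms(2) by auto
      then obtain u v where "{x} = {u, v}" "u \<noteq> v"
        using assms(3) unfolding simple_graph_def by blast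
      then show False by (auto simp: doubleton_eq_iff)
    qed
    ultimately show "id X \<noteq> id Y \<and> connected_to E (id X) (id Y)" by simp
  qed
  show ?thesis unfolding is_minor_def
    using A B C inj_on_id[of "sgV V'"] by (intro exI[of _ "sgV V'"] conjI A B exI[of _ id]) auto
qed

lemma sg_main:
  assumes "simple_graph (V :: 'a set) E" "V' \<subseteq> V" "E' \<subseteq> E" "simple_graph V' E'"
    and ext: "\<And>C :: 'a set set. hom_to_complete V' E' C \<Longrightarrow>
          \<exists>C1 :: 'x set. hom_to_complete V E C1 \<and> |C1| \<le>o |C|"
  shows "simple_graph (sgV V') (sgE E') \<and> is_minor (sgV V') (sgE E') V E \<and>
     (chromatic_number (sgV V') (sgE E'), chromatic_number V E) \<in> ordIso"
proof (intro conjI)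
  show s: "simple_graph (sgV V') (sgE E')" by (rule sg_simple[OF assms(4)])
  show "is_minor (sgV V') (sgE E') V E" by (rule sg_minor[OF assms(2,3,1)])
  have "chromatic_number (sgV V') (sgE E') \<le>o chromatic_number V E"
  proof (rule chi_le[OF s assms(1)])
    fix C2 :: "'a set" assume "hom_to_complete V E C2"
    then have "hom_to_complete (sgV V') (sgE E') C2"
      using hom_sub[OF assms(2,3)] sg_hom by blast
    then show "\<exists>C1 :: 'a set. hom_to_complete (sgV V') (sgE E') C1 \<and> |C1| \<le>o |C2|"
      using ordLeq_refl[OF card_of_Card_order] by blast
  qed
  moreover have "chromatic_number V E \<le>o chromatic_number (sgV V') (sgE E')"
  proof (rule chi_le[OF assms(1) s])
    fix C2 :: "'a set set" assume "hom_to_complete (sgV V') (sgE E') C2"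
    then have "hom_to_complete V' E' C2" using sg_hom by blast
    then show "\<exists>C1 :: 'x set. hom_to_complete V E C1 \<and> |C1| \<le>o |C2|" by (rule ext)
  qed
  ultimately show "(chromatic_number (sgV V') (sgE E'), chromatic_number V E) \<in> ordIso"
    using ordIso_iff_ordLeq by blast
qed

definition has_iso :: "'b set \<Rightarrow> 'b set set \<Rightarrow> bool" where
  "has_iso V E \<longleftrightarrow> (\<exists>x\<in>V. \<forall>y. {x, y} \<notin> E)"

lemma iso_has_iso:
  assumes "graph_iso VM EM V E" "simple_graph V E" "simple_graph VM EM"
  shows "has_iso VM EM \<longleftrightarrow> has_iso V E"
proof -
  obtain f where f: "bij_betw f VM V" "\<forall>x\<in>VM. \<forall>y\<in>VM. {x, y} \<in> EM \<longleftrightarrow> {f x, f y} \<in> E"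
    using assms(1) unfolding graph_iso_def by blast
  have edgeV: "\<And>a b. {a, b} \<in> E \<Longrightarrow> b \<in> V"
    using assms(2) unfolding simple_graph_def by (auto simp: doubleton_eq_iff)
  show ?thesis
  proof
    assume "has_iso VM EM"
    then obtain m where m: "m \<in> VM" "\<forall>y. {m, y} \<notin> EM" unfolding has_iso_def by blast
    have "\<forall>y. {f m, y} \<notin> E"
    proof (intro allI notI)
      fix y assume y: "{f m, y} \<in> E"
      then have "y \<in> V" by (rule edgeV)
      then obtain m' where "m' \<in> VM" "y = f m'" using f(1) unfolding bij_betw_def by blast
      then show False using f(2) m y by blast
    qed
    moreover have "f m \<in> V" using f(1) m(1) unfolding bij_betw_def by blast
    ultimately show "has_iso V E" unfolding has_iso_def by blast
  next
    assume "has_iso V E"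
    then obtain v where v: "v \<in> V" "\<forall>y. {v, y} \<notin> E" unfolding has_iso_def by blast
    then obtain m where m: "m \<in> VM" "v = f m" using f(1) unfolding bij_betw_def by blast
    have "\<forall>y. {m, y} \<notin> EM"
    proof (intro allI notI)
      fix y assume y: "{m, y} \<in> EM"
      show False
      proof (cases "y \<in> VM")
        case True
        then show False using f(2) m v y by blast
      next
        case False
        moreover have "y \<in> VM" using y assms(3) unfolding simple_graph_def
          by (auto simp: doubleton_eq_iff)
        ultimately show False by blast
      qed
    qed
    then show "has_iso VM EM" using m(1) unfolding has_iso_def by blast
  qed
qed

lemma sg_has_iso: "has_iso (sgV V) (sgE E) \<longleftrightarrow> has_iso V E"
proof
  assume "has_iso (sgV V) (sgE E)"
  then obtain m where m: "m \<in> sgV V" "\<forall>Y. {m, Y} \<notin> sgE E" unfolding has_iso_def by blast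
  then obtain x where x: "m = {x}" "x \<in> V" unfolding sgV_def by blast
  have "\<forall>y. {x, y} \<notin> E"
  proof (intro allI notI)
    fix y assume "{x, y} \<in> E"
    then have "{{x}, {y}} \<in> sgE E" using sgE_iff by metis
    then show False using m(2) x(1) by blast
  qed
  then show "has_iso V E" using x(2) unfolding has_iso_def by blast
next
  assume "has_iso V E"
  then obtain x where x: "x \<in> V" "\<forall>y. {x, y} \<notin> E" unfolding has_iso_def by blast
  have "\<forall>Y. {{x}, Y} \<notin> sgE E"
  proof (intro allI notI)
    fix Y assume "{{x}, Y} \<in> sgE E"
    then obtain a b where ab: "{{x}, Y} = {{a}, {b}}" "{a, b} \<in> E" by (rule sgE_elem)
    from ab(1) have "({x} = {a} \<and> Y = {b}) \<or> ({x} = {b} \<and> Y = {a})"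
      by (rule doubleton_eq_iff[THEN iffD1])
    then have "x = a \<or> x = b" by auto
    then show False using ab(2) x(2) by (metis insert_commute)
  qed
  moreover have "{x} \<in> sgV V" using x(1) unfolding sgV_def by blast
  ultimately show "has_iso (sgV V) (sgE E)" unfolding has_iso_def by blast
qed

theorem proposition2:
  fixes V :: "'a set" and E :: "'a set set"
  assumes "simple_graph V E"
    and "infinite (Field (chromatic_number V E))"
  shows "\<exists>(VM :: 'a set set) (EM :: 'a set set set).
           simple_graph VM EM \<and> is_minor VM EM V E \<and> \<not> graph_iso VM EM V E \<and>
           (chromatic_number VM EM, chromatic_number V E) \<in> ordIso"
proof -
  have edges: "\<And>e. e \<in> E \<Longrightarrow> \<exists>a b. e = {a, b} \<and> a \<in> V \<and> b \<in> V \<and> a \<noteq> b"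
    using assms(1) unfolding simple_graph_def by blast
  have "E \<noteq> {}"
  proof
    assume E0: "E = {}"
    have "hom_to_complete V E {undefined :: 'a}" unfolding hom_to_complete_def E0
      by (intro exI[of _ "\<lambda>_. undefined"]) auto
    from inf_col[OF assms this] show False by simp
  qed
  then obtain a b where ab: "{a, b} \<in> E" "a \<in> V" "b \<in> V" "a \<noteq> b" using edges by blast
  have nonisoG: "\<And>VM (EM :: 'a set set set). simple_graph VM EM \<Longrightarrow>
      has_iso VM EM \<noteq> has_iso V E \<Longrightarrow> \<not> graph_iso VM EM V E"
    using iso_has_iso assms(1) by blast
  show ?thesis
  proof (cases "has_iso V E")
    case True
    define V' where "V' = {x \<in> V. \<exists>y. {x, y} \<in> E}"
    have V'V: "V' \<subseteq> V" unfolding V'_def by blast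
    have inV': "\<And>x y. {x, y} \<in> E \<Longrightarrow> x \<in> V' \<and> y \<in> V'"
    proof -
      fix x y assume xy: "{x, y} \<in> E"
      then obtain c d where cd: "{x, y} = {c, d}" "c \<in> V" "d \<in> V" using edges by blast
      then have "x \<in> V" "y \<in> V" by (auto simp: doubleton_eq_iff)
      moreover have "{y, x} \<in> E" using xy by (simp add: insert_commute)
      ultimately show "x \<in> V' \<and> y \<in> V'" using xy unfolding V'_def by blast
    qed
    have sV': "simple_graph V' E" unfolding simple_graph_def
    proof
      fix e assume "e \<in> E"
      then obtain c d where cd: "e = {c, d}" "c \<noteq> d" using edges by blast
      then have "c \<in> V'" "d \<in> V'" using inV' \<open>e \<in> E\<close> by auto
      then show "e \<in> {{x, y} |x y. x \<in> V' \<and> y \<in> V' \<and> x \<noteq> y}" using cd by blast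
    qed
    have main: "simple_graph (sgV V') (sgE E) \<and> is_minor (sgV V') (sgE E) V E \<and>
     (chromatic_number (sgV V') (sgE E), chromatic_number V E) \<in> ordIso"
    proof (rule sg_main[where 'x="'a set", OF assms(1) V'V subset_refl sV'])
      fix C :: "'a set set" assume "hom_to_complete V' E C"
      then obtain f where f: "f ` V' \<subseteq> C" "\<forall>x\<in>V'. \<forall>y\<in>V'. {x, y} \<in> E \<longrightarrow> f x \<noteq> f y"
        unfolding hom_to_complete_def by blast
      have aV': "a \<in> V'" using inV'[OF ab(1)] by blast
      have "hom_to_complete V E C" unfolding hom_to_complete_def
      proof (intro exI[of _ "\<lambda>x. if x \<in> V' then f x else f a"] conjI ballI impI)
        show "(\<lambda>x. if x \<in> V' then f x else f a) ` V \<subseteq> C" using f(1) aV' by auto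
        fix x y assume "x \<in> V" "y \<in> V" "{x, y} \<in> E"
        then show "(if x \<in> V' then f x else f a) \<noteq> (if y \<in> V' then f y else f a)"
          using inV'[of x y] f(2) by auto
      qed
      then show "\<exists>C1 :: 'a set set. hom_to_complete V E C1 \<and> |C1| \<le>o |C|"
        using ordLeq_refl[OF card_of_Card_order] by blast
    qed
    have "\<not> has_iso V' E"
    proof
      assume "has_iso V' E"
      then obtain x where "x \<in> V'" "\<forall>y. {x, y} \<notin> E" unfolding has_iso_def by blast
      then show False unfolding V'_def by blast
    qed
    then have "has_iso (sgV V') (sgE E) \<noteq> has_iso V E" using True sg_has_iso by blast
    then have "\<not> graph_iso (sgV V') (sgE E) V E" using nonisoG main by blast
    then show ?thesis using main by blast
  next
    case False
    define E' where "E' = {e \<in> E. a \<notin> e}"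
    have E'E: "E' \<subseteq> E" unfolding E'_def by blast
    have sE': "simple_graph V E'" using assms(1) E'E unfolding simple_graph_def by blast
    have main: "simple_graph (sgV V) (sgE E') \<and> is_minor (sgV V) (sgE E') V E \<and>
     (chromatic_number (sgV V) (sgE E'), chromatic_number V E) \<in> ordIso"
    proof (rule sg_main[where 'x="'a set option", OF assms(1) subset_refl E'E sE'])
      fix C :: "'a set set" assume "hom_to_complete V E' C"
      then obtain f where f: "f ` V \<subseteq> C" "\<forall>x\<in>V. \<forall>y\<in>V. {x, y} \<in> E' \<longrightarrow> f x \<noteq> f y"
        unfolding hom_to_complete_def by blast
      let ?C1 = "insert None (Some ` C)"
      have h: "hom_to_complete V E ?C1" unfolding hom_to_complete_def
      proof (intro exI[of _ "\<lambda>x. if x = a then None else Some (f x)"] conjI ballI impI)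
        show "(\<lambda>x. if x = a then None else Some (f x)) ` V \<subseteq> ?C1" using f(1) by auto
        fix x y assume xy: "x \<in> V" "y \<in> V" "{x, y} \<in> E"
        have "x \<noteq> y"
        proof
          assume "x = y"
          then have "{x} \<in> E" using xy(3) by simp
          then obtain c d where "{x} = {c, d}" "c \<noteq> d" using edges by blast
          then show False by (auto simp: doubleton_eq_iff)
        qed
        moreover have "x \<noteq> a \<Longrightarrow> y \<noteq> a \<Longrightarrow> {x, y} \<in> E'" using xy(3) unfolding E'_def by auto
        ultimately show "(if x = a then None else Some (f x)) \<noteq> (if y = a then None else Some (f y))"
          using f(2) xy by auto
      qed
      have "infinite ?C1" by (rule inf_col[OF assms h])
      then have infC: "infinite C" by auto
      have "|?C1| \<le>o |C|"
      proof -
        have "|{None} \<union> Some ` C| \<le>o |C|"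
        proof (rule card_of_Un_ordLeq_infinite_Field)
          show "infinite (Field (card_of C))" unfolding Field_card_of by (rule infC)
          show "|{None}| \<le>o |C|" using infC by (intro card_of_singl_ordLeq) auto
          show "|Some ` C| \<le>o |C|" by (rule card_of_image)
          show "Card_order |C|" by (rule card_of_Card_order)
        qed
        then show ?thesis by simp
      qed
      with h show "\<exists>C1 :: 'a set option set. hom_to_complete V E C1 \<and> |C1| \<le>o |C|"
        by (intro exI[of _ ?C1] conjI)
    qed
    have "has_iso V E'" unfolding has_iso_def E'_def using ab(2) by blast
    then have "has_iso (sgV V) (sgE E') \<noteq> has_iso V E" using False sg_has_iso by blast
    then have "\<not> graph_iso (sgV V) (sgE E') V E" using nonisoG main by blast
    then show ?thesis using main by blast
  qed
qed

end
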